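(* Let $\mathcal F_0\subset\mathcal F^d_{bm}(\mathbf I)$ be the subspace $\mathcal F_0=\mathrm{span}\{\Omega,\ g_{\xi_n}\otimes\cdots\otimes g_{\xi_1}: n\in\mathbb N,\ \xi_n\succ\xi_{n-1}\succ\cdots\succ\xi_1\text{ in }\mathbf I\}$. Each of $A^+_\xi,A^-_\xi,A^\circ_\xi$ preserves $\mathcal F_0$; let $\mathtt B^\varepsilon_\xi$ denote the restriction of $A^\varepsilon_\xi$ to $\mathcal F_0$ ($\varepsilon\in\{+,-,\circ\}$), so that $\mathtt B^\circ_\xi=\mathtt B^+_\xi\mathtt B^-_\xi$. Let $\mathcal C$ be the algebra of bounded operators on (the closure of) $\mathcal F_0$, $\varphi(X)=\langle X\Omega,\Omega\rangle$ the vacuum state, and $\mathcal C_\xi$ the $*$-algebra generated by $\mathtt B^+_\xi,\mathtt B^-_\xi,\mathtt B^\circ_\xi$. Then $\{\mathcal C_\xi:\xi\in\mathbf I\}$ is bm-independent in $(\mathcal C,\varphi)$ with respect to the poset $(\mathbf I,\preceq)$.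
   Context: Cones and index sets: fix $d\in\mathbb N$ and one of the following three cases. (a) $\Pi_d=\mathbb R_+^d\subset\mathbb R^d$ with coordinatewise order, and $\mathbf I=\mathbb N^d$. (b) The Lorentz cone $\Pi_d=\Lambda^1_d=\{(t;x)\in\mathbb R\times\mathbb R^d: t\ge\|x\|\}$, with $(s;y)\preceq(t;x)$ iff $t-s\ge\|x-y\|$, and $\mathbf I=\mathbb N\times\mathbb Z^d$. (c) $\Pi_d$ the cone of positive semidefinite real symmetric $d\times d$ matrices, with $\rho\preceq\xi$ iff $\xi-\rho$ is positive semidefinite, and $\mathbf I$ the set of positive semidefinite symmetric $d\times d$ matrices with integer entries. Write $\xi\prec\rho$ if $\xi\preceq\rho$ and $\xi\neq\rho$; $\xi\nsim\rho$ if incomparable. Discrete bm-Fock space: for each $\xi\in\mathbf I$ let $\mathcal H_\xi$ be a Hilbert space with orthonormal basis $\{e^m_\xi: m\ge0\}$, where $\Omega:=e^0_\xi$ is a common unit vector for all $\xi$. $\mathcal F^d_{bm}(\mathbf I)$ is the Hilbert space spanned by $\Omega$ and simple tensors $h_{\rho_n}\otimes\cdots\otimes h_{\rho_1}$ with $\rho_n\succ\cdots\succ\rho_1$ in $\mathbf I$, $h_{\rho_i}\in\mathcal H_{\rho_i}$, $h_{\rho_i}\perp\Omega$; tensors of different length or different index sequences are orthogonal, $\Omega$ is orthogonal to all tensors, and $\langle h_{\rho_n}\otimes\cdots\otimes h_{\rho_1},f_{\rho_n}\otimes\cdots\otimes f_{\rho_1}\rangle=\prod_i\langle h_{\rho_i},f_{\rho_i}\rangle$.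 Fix unit vectors $g_\xi\in\mathcal H_\xi$, $g_\xi\perp\Omega$. Creation: $A^+_\xi\Omega=g_\xi$, $A^+_\xi(h_{\rho_n}\otimes\cdots\otimes h_{\rho_1})=g_\xi\otimes h_{\rho_n}\otimes\cdots\otimes h_{\rho_1}$ if $\xi\succ\rho_n$, else $0$. Annihilation: $A^-_\xi\Omega=0$, $A^-_\xi(h_{\rho_n}\otimes\cdots\otimes h_{\rho_1})=\langle g_\xi,h_{\rho_n}\rangle h_{\rho_{n-1}}\otimes\cdots\otimes h_{\rho_1}$ if $\xi=\rho_n$ (giving $\langle g_\xi,h_{\rho_1}\rangle\Omega$ when $n=1$), else $0$. Conservation: $A^\circ_\xi\Omega=0$, $A^\circ_\xi(h_{\rho_n}\otimes\cdots\otimes h_{\rho_1})=\langle g_\xi,h_{\rho_n}\rangle h_{\rho_n}\otimes\cdots\otimes h_{\rho_1}$ if $\xi=\rho_n$, else $0$. bm-independence: for $(\mathcal A,\varphi)$ an algebra with a state and a poset $(\mathbb X,\preceq)$, subalgebras $\{\mathcal A_\xi\}$ are bm-independent if: (BM1) whenever $\xi\prec\rho\succ\eta$, or $\xi\nsim\rho\succ\eta$, or $\xi\prec\rho\nsim\eta$, then $a_1a_2a_3=\varphi(a_2)a_1a_3$ for all $a_1\in\mathcal A_\xi,a_2\in\mathcal A_\rho,a_3\in\mathcal A_\eta$; (BM2) whenever $\xi_1\succ\cdots\succ\xi_m\nsim\cdots\nsim\xi_k\prec\xi_{k+1}\prec\cdots\prec\xi_n$ for some $1\le m\le k\le n$ and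 $a_j\in\mathcal A_{\xi_j}$, then $\varphi(a_1\cdots a_n)=\prod_j\varphi(a_j)$. *)

theory Defs
  imports "HOL-Analysis.Analysis"
begin

definition strict :: "('i \<Rightarrow> 'i \<Rightarrow> bool) \<Rightarrow> 'i \<Rightarrow> 'i \<Rightarrow> bool" where
  "strict le x y \<longleftrightarrow> le x y \<and> x \<noteq> y"

definition incomp :: "('i \<Rightarrow> 'i \<Rightarrow> bool) \<Rightarrow> 'i \<Rightarrow> 'i \<Rightarrow> bool" where
  "incomp le x y \<longleftrightarrow> \<not> le x y \<and> \<not> le y x"

text \<open>A chain [rho_n, ..., rho_1] with rho_n > ... > rho_1 in I (head = largest element).
  The empty chain indexes the vacuum Omega.\<close>

definition is_chain :: "'i set \<Rightarrow> ('i \<Rightarrow> 'i \<Rightarrow> bool) \<Rightarrow> 'i list \<Rightarrow> bool" where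
  "is_chain I le c \<longleftrightarrow> set c \<subseteq> I \<and> sorted_wrt (\<lambda>a b. strict le b a) c"

text \<open>F_0 is identified (unitarily) with the finitely supported complex functions on chains:
  the chain c corresponds to the orthonormal vector g_{rho_n} (x) ... (x) g_{rho_1}, and [] to Omega.\<close>

type_synonym 'i vec = "'i list \<Rightarrow> complex"
type_synonym 'i op = "'i vec \<Rightarrow> 'i vec"

definition F0 :: "'i set \<Rightarrow> ('i \<Rightarrow> 'i \<Rightarrow> bool) \<Rightarrow> 'i vec set" where
  "F0 I le = {v. finite {c. v c \<noteq> 0} \<and> (\<forall>c. v c \<noteq> 0 \<longrightarrow> is_chain I le c)}"

definition inner_F :: "'i vec \<Rightarrow> 'i vec \<Rightarrow> complex" where
  "inner_F u v = (\<Sum>c\<in>{c. u c \<noteq> 0}. u c * cnj (v c))"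

definition vac :: "'i vec" where
  "vac = (\<lambda>c. if c = [] then 1 else 0)"

definition Bp :: "'i set \<Rightarrow> ('i \<Rightarrow> 'i \<Rightarrow> bool) \<Rightarrow> 'i \<Rightarrow> 'i op" where
  "Bp I le \<xi> v = (\<lambda>d. case d of [] \<Rightarrow> 0
      | x # c \<Rightarrow> (if x = \<xi> \<and> is_chain I le d then v c else 0))"

definition Bm :: "'i set \<Rightarrow> ('i \<Rightarrow> 'i \<Rightarrow> bool) \<Rightarrow> 'i \<Rightarrow> 'i op" where
  "Bm I le \<xi> v = (\<lambda>c. if is_chain I le (\<xi> # c) then v (\<xi> # c) else 0)"

definition Bo :: "'i set \<Rightarrow> ('i \<Rightarrow> 'i \<Rightarrow> bool) \<Rightarrow> 'i \<Rightarrow> 'i op" where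
  "Bo I le \<xi> v = (\<lambda>d. case d of [] \<Rightarrow> 0
      | x # c \<Rightarrow> (if x = \<xi> \<and> is_chain I le d then v d else 0))"

definition vstate :: "'i op \<Rightarrow> complex" where
  "vstate X = inner_F (X vac) vac"

text \<open>The *-algebra C_xi generated by Bp, Bm, Bo (non-unital), as operators on F_0.
  Closure under * : if S is an operator on F_0 which is the adjoint of a on F_0, then S is in.\<close>

inductive_set Calg :: "'i set \<Rightarrow> ('i \<Rightarrow> 'i \<Rightarrow> bool) \<Rightarrow> 'i \<Rightarrow> 'i op set"
  for I le \<xi> where
  gen_p: "Bp I le \<xi> \<in> Calg I le \<xi>"
| gen_m: "Bm I le \<xi> \<in> Calg I le \<xi>"
| gen_o: "Bo I le \<xi> \<in> Calg I le \<xi>"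
| add: "a \<in> Calg I le \<xi> \<Longrightarrow> b \<in> Calg I le \<xi> \<Longrightarrow> (\<lambda>v c. a v c + b v c) \<in> Calg I le \<xi>"
| smult: "a \<in> Calg I le \<xi> \<Longrightarrow> (\<lambda>v c. z * a v c) \<in> Calg I le \<xi>"
| mult: "a \<in> Calg I le \<xi> \<Longrightarrow> b \<in> Calg I le \<xi> \<Longrightarrow> a \<circ> b \<in> Calg I le \<xi>"
| adj: "a \<in> Calg I le \<xi> \<Longrightarrow> (\<forall>v\<in>F0 I le. S v \<in> F0 I le) \<Longrightarrow>
        (\<forall>x\<in>F0 I le. \<forall>y\<in>F0 I le. inner_F (a x) y = inner_F x (S y)) \<Longrightarrow> S \<in> Calg I le \<xi>"

text \<open>bm-independence of the family Calg in (C, vacuum state); equality in C is equality on F_0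
  (equivalently on its closure, the operators being bounded).\<close>

definition op_eq :: "'i set \<Rightarrow> ('i \<Rightarrow> 'i \<Rightarrow> bool) \<Rightarrow> 'i op \<Rightarrow> 'i op \<Rightarrow> bool" where
  "op_eq I le A B \<longleftrightarrow> (\<forall>v\<in>F0 I le. A v = B v)"

definition BM1 :: "'i set \<Rightarrow> ('i \<Rightarrow> 'i \<Rightarrow> bool) \<Rightarrow> ('i \<Rightarrow> 'i op set) \<Rightarrow> bool" where
  "BM1 I le A \<longleftrightarrow>
    (\<forall>\<xi>\<in>I. \<forall>\<rho>\<in>I. \<forall>\<eta>\<in>I.
       ((strict le \<xi> \<rho> \<and> strict le \<eta> \<rho>) \<or> (incomp le \<xi> \<rho> \<and> strict le \<eta> \<rho>)
         \<or> (strict le \<xi> \<rho> \<and> incomp le \<rho> \<eta>)) \<longrightarrow>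
       (\<forall>a1\<in>A \<xi>. \<forall>a2\<in>A \<rho>. \<forall>a3\<in>A \<eta>.
          op_eq I le (a1 \<circ> a2 \<circ> a3) (\<lambda>v c. vstate a2 * (a1 \<circ> a3) v c)))"

definition BM2 :: "'i set \<Rightarrow> ('i \<Rightarrow> 'i \<Rightarrow> bool) \<Rightarrow> ('i \<Rightarrow> 'i op set) \<Rightarrow> bool" where
  "BM2 I le A \<longleftrightarrow>
    (\<forall>xs :: 'i list. \<forall>as :: 'i op list. \<forall>m k.
       length as = length xs \<and> set xs \<subseteq> I \<and> m \<le> k \<and> k < length xs \<and>
       (\<forall>j<m. strict le (xs ! (j+1)) (xs ! j)) \<and>
       (\<forall>j. m \<le> j \<and> j < k \<longrightarrow> incomp le (xs ! j) (xs ! (j+1))) \<and>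
       (\<forall>j. k \<le> j \<and> j + 1 < length xs \<longrightarrow> strict le (xs ! j) (xs ! (j+1))) \<and>
       (\<forall>j<length xs. as ! j \<in> A (xs ! j))
       \<longrightarrow> vstate (foldr (\<circ>) as id) = prod_list (map vstate as))"

definition bm_independent :: "'i set \<Rightarrow> ('i \<Rightarrow> 'i \<Rightarrow> bool) \<Rightarrow> ('i \<Rightarrow> 'i op set) \<Rightarrow> bool" where
  "bm_independent I le A \<longleftrightarrow> BM1 I le A \<and> BM2 I le A"

section \<open>The three concrete index sets (vectors / matrices of dimension d as functions with
  zero outside indices < d)\<close>

definition I_a :: "nat \<Rightarrow> (nat \<Rightarrow> nat) set" where
  "I_a d = {x. \<forall>i\<ge>d. x i = 0}"
definition le_a :: "nat \<Rightarrow> (nat \<Rightarrow> nat) \<Rightarrow> (nat \<Rightarrow> nat) \<Rightarrow> bool" where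
  "le_a d x y \<longleftrightarrow> (\<forall>i<d. x i \<le> y i)"

definition I_b :: "nat \<Rightarrow> (nat \<times> (nat \<Rightarrow> int)) set" where
  "I_b d = {(t, x). \<forall>i\<ge>d. x i = 0}"
definition le_b :: "nat \<Rightarrow> nat \<times> (nat \<Rightarrow> int) \<Rightarrow> nat \<times> (nat \<Rightarrow> int) \<Rightarrow> bool" where
  "le_b d p q \<longleftrightarrow> (case p of (s, y) \<Rightarrow> case q of (t, x) \<Rightarrow>
      real t - real s \<ge> sqrt (\<Sum>i<d. (real_of_int (x i - y i))\<^sup>2))"

definition psd :: "nat \<Rightarrow> (nat \<Rightarrow> nat \<Rightarrow> real) \<Rightarrow> bool" where
  "psd d M \<longleftrightarrow> (\<forall>v :: nat \<Rightarrow> real. (\<Sum>i<d. \<Sum>j<d. v i * M i j * v j) \<ge> 0)"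
definition I_c :: "nat \<Rightarrow> (nat \<Rightarrow> nat \<Rightarrow> int) set" where
  "I_c d = {M. (\<forall>i j. (i \<ge> d \<or> j \<ge> d) \<longrightarrow> M i j = 0) \<and> (\<forall>i j. M i j = M j i)
             \<and> psd d (\<lambda>i j. real_of_int (M i j))}"
definition le_c :: "nat \<Rightarrow> (nat \<Rightarrow> nat \<Rightarrow> int) \<Rightarrow> (nat \<Rightarrow> nat \<Rightarrow> int) \<Rightarrow> bool" where
  "le_c d R X \<longleftrightarrow> psd d (\<lambda>i j. real_of_int (X i j - R i j))"

end

theory Submission
  imports Defs
begin

definition adm where "adm I le \<xi> c \<longleftrightarrow> is_chain I le c \<and> (c = [] \<or> strict le (hd c) \<xi>)"
definition topc where "topc I le \<xi> c \<longleftrightarrow> is_chain I le c \<and> c \<noteq> [] \<and> hd c = \<xi>"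
definition T :: "'i set \<Rightarrow> ('i \<Rightarrow> 'i \<Rightarrow> bool) \<Rightarrow> 'i \<Rightarrow> complex \<Rightarrow> complex \<Rightarrow> complex \<Rightarrow> complex \<Rightarrow> 'i op" where
  "T I le \<xi> p q r s v = (\<lambda>c. if adm I le \<xi> c then p * v c + q * v (\<xi> # c)
      else if topc I le \<xi> c then r * v (tl c) + s * v c else 0)"
definition ev :: "'i list \<Rightarrow> 'i vec" where "ev c0 = (\<lambda>c. if c = c0 then 1 else 0)"

lemma chain_Cons: "is_chain I le (x # c) \<longleftrightarrow> x \<in> I \<and> is_chain I le c \<and> (\<forall>y\<in>set c. strict le y x)"
  unfolding is_chain_def by auto

lemma adm_not_top: "adm I le \<xi> c \<Longrightarrow> \<not> topc I le \<xi> c"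
  unfolding adm_def topc_def strict_def by auto

lemma inner_F_super: assumes "finite F" "{c. u c \<noteq> 0} \<subseteq> F"
  shows "inner_F u w = (\<Sum>c\<in>F. u c * cnj (w c))"
  unfolding inner_F_def by (rule sum.mono_neutral_left) (use assms in auto)

lemma inner_two: assumes "x \<noteq> z"
  shows "inner_F (\<lambda>d. \<alpha> * ev x d + \<beta> * ev z d) w = \<alpha> * cnj (w x) + \<beta> * cnj (w z)"
proof -
  have "inner_F (\<lambda>d. \<alpha> * ev x d + \<beta> * ev z d) w
      = (\<Sum>c\<in>{x,z}. (\<alpha> * ev x c + \<beta> * ev z c) * cnj (w c))"
    by (rule inner_F_super) (auto simp: ev_def split: if_splits)
  also have "\<dots> = \<alpha> * cnj (w x) + \<beta> * cnj (w z)" using assms by (simp add: ev_def)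
  finally show ?thesis .
qed

lemma inner_zero: "inner_F (\<lambda>d. 0) w = 0"
  unfolding inner_F_def by simp

lemma inner_vac: assumes "finite {c. u c \<noteq> 0}" shows "inner_F u vac = u []"
proof -
  have "inner_F u vac = (\<Sum>c\<in>insert [] {c. u c \<noteq> 0}. u c * cnj (vac c))"
    by (rule inner_F_super) (use assms in auto)
  also have "\<dots> = u []"
    using assms by (simp add: vac_def sum.insert_if if_distrib sum.delta cong: if_cong)
  finally show ?thesis .
qed

locale po =
  fixes I :: "'i set" and le :: "'i \<Rightarrow> 'i \<Rightarrow> bool"
  assumes refl: "x \<in> I \<Longrightarrow> le x x"
  and trans: "x \<in> I \<Longrightarrow> y \<in> I \<Longrightarrow> z \<in> I \<Longrightarrow> le x y \<Longrightarrow> le y z \<Longrightarrow> le x z"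
  and antisym: "x \<in> I \<Longrightarrow> y \<in> I \<Longrightarrow> le x y \<Longrightarrow> le y x \<Longrightarrow> x = y"
begin

lemma strict_trans: "x\<in>I \<Longrightarrow> y\<in>I \<Longrightarrow> z\<in>I \<Longrightarrow> strict le x y \<Longrightarrow> strict le y z \<Longrightarrow> strict le x z"
  unfolding strict_def using trans antisym by blast

lemma chain_Cons_adm: assumes "\<xi> \<in> I" shows "is_chain I le (\<xi> # c) \<longleftrightarrow> adm I le \<xi> c"
proof
  assume "is_chain I le (\<xi>#c)" then show "adm I le \<xi> c" unfolding adm_def chain_Cons by (cases c) auto
next
  assume a: "adm I le \<xi> c"
  show "is_chain I le (\<xi>#c)"
  proof (cases c)
    case Nil then show ?thesis using assms unfolding is_chain_def by simp
  next
    case (Cons h t)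
    have hc: "is_chain I le (h#t)" and s: "strict le h \<xi>" using a Cons unfolding adm_def by auto
    have hI: "h \<in> I" and tI: "set t \<subseteq> I" and ht: "\<forall>y\<in>set t. strict le y h"
      using hc unfolding is_chain_def by auto
    have "\<forall>y\<in>set (h#t). strict le y \<xi>" using strict_trans[OF _ hI assms _ s] ht tI s by auto
    moreover have "is_chain I le c" using hc Cons by simp
    ultimately show ?thesis unfolding chain_Cons[of I le \<xi>] using assms Cons by blast
  qed
qed

lemma top_Cons: "\<xi> \<in> I \<Longrightarrow> adm I le \<xi> c \<Longrightarrow> topc I le \<xi> (\<xi> # c)"
  using chain_Cons_adm unfolding topc_def by auto

lemma top_tl: assumes "\<xi> \<in> I" "topc I le \<xi> c" shows "adm I le \<xi> (tl c)" "\<xi> # tl c = c"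
proof -
  show e: "\<xi> # tl c = c" using assms unfolding topc_def by (cases c) auto
  show "adm I le \<xi> (tl c)" using assms(2) chain_Cons_adm[OF assms(1), of "tl c"] e
    unfolding topc_def by simp
qed

lemma adm_chain: "adm I le \<xi> c \<Longrightarrow> is_chain I le c" unfolding adm_def by simp
lemma top_chain: "topc I le \<xi> c \<Longrightarrow> is_chain I le c" unfolding topc_def by simp


lemma T_lin: "T I le \<xi> p q r s (\<lambda>d. \<alpha> * u d + \<beta> * w d) = (\<lambda>d. \<alpha> * T I le \<xi> p q r s u d + \<beta> * T I le \<xi> p q r s w d)"
  by (rule ext) (simp add: T_def algebra_simps)

lemma T_comp: assumes "\<xi> \<in> I"
  shows "T I le \<xi> p q r s (T I le \<xi> p2 q2 r2 s2 v)
    = T I le \<xi> (p * p2 + q * r2) (p * q2 + q * s2) (r * p2 + s * r2) (r * q2 + s * s2) v"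
proof (rule ext)
  fix c
  show "T I le \<xi> p q r s (T I le \<xi> p2 q2 r2 s2 v) c
    = T I le \<xi> (p * p2 + q * r2) (p * q2 + q * s2) (r * p2 + s * r2) (r * q2 + s * s2) v c"
  proof (cases "adm I le \<xi> c")
    case True
    have tc: "topc I le \<xi> (\<xi>#c)" using top_Cons assms True by blast
    then have "topc I le \<xi> (\<xi>#c)" "\<not> adm I le \<xi> (\<xi>#c)" using adm_not_top[of I le \<xi>] by blast+
    then show ?thesis using True by (simp add: T_def algebra_simps)
  next
    case False
    show ?thesis
    proof (cases "topc I le \<xi> c")
      case True
      then have "adm I le \<xi> (tl c)" "\<xi> # tl c = c" using top_tl assms by auto
      then show ?thesis using True False by (simp add: T_def algebra_simps)
    qed (use False in \<open>simp add: T_def\<close>)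
  qed
qed

lemma T_F0: assumes "\<xi> \<in> I" "v \<in> F0 I le" shows "T I le \<xi> p q r s v \<in> F0 I le"
proof -
  let ?S = "{c. v c \<noteq> 0}"
  have fin: "finite ?S" using assms unfolding F0_def by auto
  have "{c. T I le \<xi> p q r s v c \<noteq> 0} \<subseteq> ?S \<union> tl ` ?S \<union> Cons \<xi> ` ?S"
  proof
    fix c assume "c \<in> {c. T I le \<xi> p q r s v c \<noteq> 0}"
    then have nz: "T I le \<xi> p q r s v c \<noteq> 0" by simp
    show "c \<in> ?S \<union> tl ` ?S \<union> Cons \<xi> ` ?S"
    proof (cases "adm I le \<xi> c")
      case True
      then have "v c \<noteq> 0 \<or> v (\<xi>#c) \<noteq> 0" using nz by (auto simp: T_def)
      then show ?thesis by (metis (mono_tags, lifting) Un_iff image_eqI list.sel(3) mem_Collect_eq)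
    next
      case False
      then have tc: "topc I le \<xi> c" using nz by (auto simp: T_def split: if_splits)
      then have "v (tl c) \<noteq> 0 \<or> v c \<noteq> 0" using nz False by (auto simp: T_def)
      moreover have "c = \<xi> # tl c" using top_tl[OF assms(1) tc] by simp
      ultimately show ?thesis by (metis (mono_tags, lifting) Un_iff image_eqI mem_Collect_eq)
    qed
  qed
  then have "finite {c. T I le \<xi> p q r s v c \<noteq> 0}" using fin by (meson finite_Un finite_imageI finite_subset)
  moreover have "\<forall>c. T I le \<xi> p q r s v c \<noteq> 0 \<longrightarrow> is_chain I le c"
    using adm_chain top_chain by (auto simp: T_def split: if_splits)
  ultimately show ?thesis unfolding F0_def by simp
qed

lemma Bp_T: assumes "\<xi> \<in> I" shows "Bp I le \<xi> = T I le \<xi> 0 0 1 0"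
proof (intro ext)
  fix v d show "Bp I le \<xi> v d = T I le \<xi> 0 0 1 0 v d"
  proof (cases d)
    case Nil then show ?thesis by (simp add: Bp_def T_def adm_def topc_def is_chain_def)
  next
    case (Cons x c)
    show ?thesis
    proof (cases "x = \<xi> \<and> is_chain I le d")
      case True
      then have "topc I le \<xi> d" "\<not> adm I le \<xi> d" using Cons unfolding topc_def adm_def strict_def by auto
      then show ?thesis using True Cons by (auto simp add: Bp_def T_def)
    next
      case False
      then have "\<not> topc I le \<xi> d" using Cons unfolding topc_def by auto
      then show ?thesis using False Cons by (auto simp add: Bp_def T_def)
    qed
  qed
qed

lemma Bm_T: assumes "\<xi> \<in> I" shows "Bm I le \<xi> = T I le \<xi> 0 1 0 0"
  by (intro ext) (simp add: Bm_def T_def chain_Cons_adm[OF assms])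

lemma Bo_T: assumes "\<xi> \<in> I" shows "Bo I le \<xi> = T I le \<xi> 0 0 0 1"
proof (intro ext)
  fix v d show "Bo I le \<xi> v d = T I le \<xi> 0 0 0 1 v d"
  proof (cases d)
    case Nil then show ?thesis by (simp add: Bo_def T_def adm_def topc_def is_chain_def)
  next
    case (Cons x c)
    show ?thesis
    proof (cases "x = \<xi> \<and> is_chain I le d")
      case True
      then have "topc I le \<xi> d" "\<not> adm I le \<xi> d" using Cons unfolding topc_def adm_def strict_def by auto
      then show ?thesis using True Cons by (auto simp add: Bo_def T_def)
    next
      case False
      then have "\<not> topc I le \<xi> d" using Cons unfolding topc_def by auto
      then show ?thesis using False Cons by (auto simp add: Bo_def T_def)
    qed
  qed
qed

lemma T_ev_adm: assumes "\<xi> \<in> I" "adm I le \<xi> c"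
  shows "T I le \<xi> p q r s (ev c) = (\<lambda>d. p * ev c d + r * ev (\<xi>#c) d)"
proof (rule ext)
  fix d
  have tc: "topc I le \<xi> (\<xi>#c)" using top_Cons assms by auto
  have nt: "\<not> topc I le \<xi> c" using adm_not_top[of I le \<xi>] assms by blast
  show "T I le \<xi> p q r s (ev c) d = p * ev c d + r * ev (\<xi>#c) d"
  proof (cases "adm I le \<xi> d")
    case True
    then have "\<xi> # d \<noteq> c" using nt top_Cons assms by auto
    moreover have "d \<noteq> \<xi> # c" using True tc adm_not_top[of I le \<xi>] by blast
    ultimately show ?thesis using True by (simp add: T_def ev_def)
  next
    case False
    then have "d \<noteq> c" using assms by auto
    moreover have "topc I le \<xi> d \<Longrightarrow> (tl d = c) = (d = \<xi> # c)" using top_tl assms by fastforce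
    moreover have "d = \<xi> # c \<Longrightarrow> topc I le \<xi> d" using tc by simp
    ultimately show ?thesis using False by (auto simp: T_def ev_def)
  qed
qed

lemma T_ev_top: assumes "\<xi> \<in> I" "topc I le \<xi> c"
  shows "T I le \<xi> p q r s (ev c) = (\<lambda>d. q * ev (tl c) d + s * ev c d)"
proof (rule ext)
  fix d
  have ac: "adm I le \<xi> (tl c)" and ce: "\<xi> # tl c = c" using top_tl assms by auto
  have na: "\<not> adm I le \<xi> c" using adm_not_top[of I le \<xi>] assms(2) by blast
  show "T I le \<xi> p q r s (ev c) d = q * ev (tl c) d + s * ev c d"
  proof (cases "adm I le \<xi> d")
    case True
    then have "d \<noteq> c" using na by auto
    moreover have "(\<xi> # d = c) = (d = tl c)" using ce by auto
    ultimately show ?thesis using True by (simp add: T_def ev_def)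
  next
    case False
    then have "d \<noteq> tl c" using ac by auto
    moreover have "topc I le \<xi> d \<Longrightarrow> tl d \<noteq> c"
    proof
      assume "topc I le \<xi> d" "tl d = c"
      then have "adm I le \<xi> c" using top_tl assms by metis
      then show False using na by simp
    qed
    ultimately show ?thesis using False assms by (auto simp: T_def ev_def)
  qed
qed

lemma T_ev_other: assumes "\<xi> \<in> I" "\<not> adm I le \<xi> c" "\<not> topc I le \<xi> c"
  shows "T I le \<xi> p q r s (ev c) = (\<lambda>d. 0)"
proof (rule ext)
  fix d
  show "T I le \<xi> p q r s (ev c) d = 0"
  proof (cases "adm I le \<xi> d")
    case True
    then have "d \<noteq> c" "\<xi> # d \<noteq> c" using assms top_Cons by auto
    then show ?thesis using True by (simp add: T_def ev_def)
  next
    case False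
    have "topc I le \<xi> d \<Longrightarrow> tl d \<noteq> c \<and> d \<noteq> c" using top_tl assms by metis
    then show ?thesis using False by (auto simp: T_def ev_def)
  qed
qed

lemma chain_ev_F0: "is_chain I le c \<Longrightarrow> ev c \<in> F0 I le"
  unfolding F0_def ev_def by auto

lemma vac_ev: "vac = ev []" unfolding vac_def ev_def by auto

lemma vac_F0: "vac \<in> F0 I le"
  unfolding vac_ev by (rule chain_ev_F0) (simp add: is_chain_def)


lemma inner_ev: "inner_F (ev c) w = cnj (w c)"
proof -
  have "inner_F (ev c) w = (\<Sum>x\<in>{c}. ev c x * cnj (w x))"
    by (rule inner_F_super) (auto simp: ev_def split: if_splits)
  then show ?thesis by (simp add: ev_def)
qed

lemma Calg_rep: assumes "a \<in> Calg I le \<xi>" "\<xi> \<in> I"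
  shows "\<exists>p q r s. \<forall>v\<in>F0 I le. a v = T I le \<xi> p q r s v"
  using assms(1)
proof induct
  case gen_p
  have "\<forall>v\<in>F0 I le. Bp I le \<xi> v = T I le \<xi> 0 0 1 0 v" using Bp_T[OF assms(2)] by simp
  then show ?case by blast
next
  case gen_m
  have "\<forall>v\<in>F0 I le. Bm I le \<xi> v = T I le \<xi> 0 1 0 0 v" using Bm_T[OF assms(2)] by simp
  then show ?case by blast
next
  case gen_o
  have "\<forall>v\<in>F0 I le. Bo I le \<xi> v = T I le \<xi> 0 0 0 1 v" using Bo_T[OF assms(2)] by simp
  then show ?case by blast
next
  case (add a b)
  then obtain p q r s p2 q2 r2 s2 where A: "\<forall>v\<in>F0 I le. a v = T I le \<xi> p q r s v"
    and B: "\<forall>v\<in>F0 I le. b v = T I le \<xi> p2 q2 r2 s2 v" by blast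
  have "\<forall>v\<in>F0 I le. (\<lambda>c. a v c + b v c) = T I le \<xi> (p+p2) (q+q2) (r+r2) (s+s2) v"
    using A B by (auto simp: T_def algebra_simps)
  then show ?case by blast
next
  case (smult a z)
  then obtain p q r s where A: "\<forall>v\<in>F0 I le. a v = T I le \<xi> p q r s v" by blast
  have "\<forall>v\<in>F0 I le. (\<lambda>c. z * a v c) = T I le \<xi> (z * p) (z * q) (z * r) (z * s) v"
    using A by (auto simp: T_def algebra_simps)
  then show ?case by blast
next
  case (mult a b)
  then obtain p q r s p2 q2 r2 s2 where A: "\<forall>v\<in>F0 I le. a v = T I le \<xi> p q r s v"
    and B: "\<forall>v\<in>F0 I le. b v = T I le \<xi> p2 q2 r2 s2 v" by blast
  have "\<forall>v\<in>F0 I le. (a \<circ> b) v = T I le \<xi> (p * p2 + q * r2) (p * q2 + q * s2) (r * p2 + s * r2) (r * q2 + s * s2) v"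
    using A B T_F0[OF assms(2)] T_comp[OF assms(2)] by simp
  then show ?case by blast
next
  case (adj a S)
  then obtain p q r s where A: "\<forall>v\<in>F0 I le. a v = T I le \<xi> p q r s v" by blast
  have "S y = T I le \<xi> (cnj p) (cnj r) (cnj q) (cnj s) y" if y: "y \<in> F0 I le" for y
  proof (rule ext)
    fix c
    show "S y c = T I le \<xi> (cnj p) (cnj r) (cnj q) (cnj s) y c"
    proof (cases "is_chain I le c")
      case False
      have "S y \<in> F0 I le" using adj y by blast
      then have "S y c = 0" using False unfolding F0_def by auto
      moreover have "\<not> adm I le \<xi> c" "\<not> topc I le \<xi> c" using False adm_chain top_chain by blast+
      ultimately show ?thesis by (simp add: T_def)
    next
      case True
      have e: "ev c \<in> F0 I le" using chain_ev_F0[OF True] .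
      have "inner_F (a (ev c)) y = inner_F (ev c) (S y)" using adj e y by blast
      then have Sy: "S y c = cnj (inner_F (T I le \<xi> p q r s (ev c)) y)"
        using A e by (simp add: inner_ev)
      show ?thesis
      proof (cases "adm I le \<xi> c")
        case ad: True
        have "c \<noteq> \<xi> # c" by simp
        then show ?thesis using Sy T_ev_adm[OF assms(2) ad] ad
          by (simp add: inner_two T_def)
      next
        case na: False
        show ?thesis
        proof (cases "topc I le \<xi> c")
          case tc: True
          have "tl c \<noteq> c" using tc unfolding topc_def by (cases c) auto
          then show ?thesis using Sy T_ev_top[OF assms(2) tc] tc na
            by (simp add: inner_two T_def)
        next
          case nt: False
          show ?thesis using Sy T_ev_other[OF assms(2) na nt] na nt
            by (simp add: inner_zero T_def)
        qed
      qed
    qed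
  qed
  then show ?case by blast
qed

lemma Calg_F0: assumes "a \<in> Calg I le \<xi>" "\<xi> \<in> I" "v \<in> F0 I le" shows "a v \<in> F0 I le"
  using Calg_rep[OF assms(1,2)] T_F0[OF assms(2)] assms(3) by metis

lemma vstate_rep: assumes "\<xi> \<in> I" "\<forall>v\<in>F0 I le. a v = T I le \<xi> p q r s v"
  shows "vstate a = p"
proof -
  have ad: "adm I le \<xi> []" unfolding adm_def is_chain_def by simp
  have "a vac = (\<lambda>d. p * ev [] d + r * ev [\<xi>] d)"
    using assms(2) vac_F0 T_ev_adm[OF assms(1) ad] unfolding vac_ev by simp
  then have "vstate a = inner_F (\<lambda>d. p * ev [] d + r * ev [\<xi>] d) (ev [])"
    unfolding vstate_def vac_ev by simp
  also have "\<dots> = p" by (subst inner_two) (auto simp: ev_def)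
  finally show ?thesis .
qed


lemma hd_I: "is_chain I le e \<Longrightarrow> e \<noteq> [] \<Longrightarrow> hd e \<in> I"
  unfolding is_chain_def by (cases e) auto

lemma T_local: assumes "\<xi> \<in> I" "\<forall>e. adm I le \<xi> e \<or> topc I le \<xi> e \<longrightarrow> X e = k * Y e"
  shows "T I le \<xi> p q r s X c = k * T I le \<xi> p q r s Y c"
proof (cases "adm I le \<xi> c")
  case True
  then have "topc I le \<xi> (\<xi>#c)" using top_Cons assms(1) by blast
  then show ?thesis using True assms(2) by (simp add: T_def algebra_simps)
next
  case False
  show ?thesis
  proof (cases "topc I le \<xi> c")
    case True
    then have "adm I le \<xi> (tl c)" using top_tl assms(1) by blast
    then show ?thesis using True False assms(2) by (simp add: T_def algebra_simps)
  qed (use False in \<open>simp add: T_def\<close>)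
qed

lemma case12:
  assumes I: "\<xi> \<in> I" "\<rho> \<in> I" "\<eta> \<in> I" and s: "strict le \<eta> \<rho>" and nl: "\<not> le \<rho> \<xi>"
    and e: "adm I le \<xi> e \<or> topc I le \<xi> e"
  shows "T I le \<rho> p q r s2 (T I le \<eta> p2 q2 r2 s3 w) e = p * T I le \<eta> p2 q2 r2 s3 w e"
proof -
  let ?Y = "T I le \<eta> p2 q2 r2 s3 w"
  have ch: "is_chain I le e" using e adm_chain top_chain by blast
  have nt: "\<not> topc I le \<rho> e"
  proof
    assume t: "topc I le \<rho> e"
    then have "hd e = \<rho>" "e \<noteq> []" unfolding topc_def by auto
    then show False using e nl refl[OF I(1)] unfolding adm_def topc_def strict_def by auto
  qed
  have "\<not> adm I le \<eta> (\<rho>#e)"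
  proof
    assume "adm I le \<eta> (\<rho>#e)"
    then have "strict le \<rho> \<eta>" unfolding adm_def by simp
    then show False using s antisym I unfolding strict_def by blast
  qed
  moreover have "\<not> topc I le \<eta> (\<rho>#e)" using s unfolding topc_def strict_def by auto
  ultimately have Y0: "?Y (\<rho>#e) = 0" by (simp add: T_def)
  show ?thesis
  proof (cases "adm I le \<rho> e")
    case True then show ?thesis using Y0 by (simp add: T_def)
  next
    case False
    have "\<not> adm I le \<eta> e"
    proof
      assume a: "adm I le \<eta> e"
      have "adm I le \<rho> e"
      proof (cases "e = []")
        case True then show ?thesis using ch unfolding adm_def by simp
      next
        case ne: False
        then have "strict le (hd e) \<eta>" using a unfolding adm_def by simp
        then have "strict le (hd e) \<rho>" using strict_trans[OF hd_I[OF ch ne] I(3,2)] s by blast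
        then show ?thesis using ch unfolding adm_def by simp
      qed
      then show False using False by simp
    qed
    moreover have "\<not> topc I le \<eta> e"
    proof
      assume "topc I le \<eta> e"
      then have "hd e = \<eta>" "e \<noteq> []" unfolding topc_def by auto
      then have "adm I le \<rho> e" using ch s unfolding adm_def by simp
      then show False using False by simp
    qed
    ultimately show ?thesis using False nt by (simp add: T_def)
  qed
qed

lemma case3:
  assumes I: "\<xi> \<in> I" "\<rho> \<in> I" "\<eta> \<in> I" and s: "strict le \<xi> \<rho>" and ic: "incomp le \<rho> \<eta>"
    and e: "adm I le \<xi> e \<or> topc I le \<xi> e"
  shows "T I le \<rho> p q r s2 (T I le \<eta> p2 q2 r2 s3 w) e = p * T I le \<eta> p2 q2 r2 s3 w e"
proof -
  let ?Y = "T I le \<eta> p2 q2 r2 s3 w"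
  have ch: "is_chain I le e" using e adm_chain top_chain by blast
  have ad: "adm I le \<rho> e"
  proof (cases "e = []")
    case True then show ?thesis using ch unfolding adm_def by simp
  next
    case ne: False
    have "strict le (hd e) \<rho>"
    proof (cases "adm I le \<xi> e")
      case True
      then have "strict le (hd e) \<xi>" using ne unfolding adm_def by simp
      then show ?thesis using strict_trans[OF hd_I[OF ch ne] I(1,2)] s by blast
    next
      case False
      then have "hd e = \<xi>" using e unfolding topc_def by simp
      then show ?thesis using s by simp
    qed
    then show ?thesis using ch unfolding adm_def by simp
  qed
  have "\<not> adm I le \<eta> (\<rho>#e)"
  proof
    assume "adm I le \<eta> (\<rho>#e)"
    then have "strict le \<rho> \<eta>" unfolding adm_def by simp
    then show False using ic unfolding strict_def incomp_def by blast
  qed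
  moreover have "\<not> topc I le \<eta> (\<rho>#e)" using ic refl[OF I(2)] unfolding topc_def incomp_def by auto
  ultimately have Y0: "?Y (\<rho>#e) = 0" by (simp add: T_def)
  show ?thesis using ad Y0 by (simp add: T_def)
qed

lemma BM1_po: "BM1 I le (Calg I le)"
  unfolding BM1_def
proof (intro ballI impI)
  fix \<xi> \<rho> \<eta> a1 a2 a3
  assume I: "\<xi> \<in> I" "\<rho> \<in> I" "\<eta> \<in> I"
    and cond: "strict le \<xi> \<rho> \<and> strict le \<eta> \<rho> \<or> incomp le \<xi> \<rho> \<and> strict le \<eta> \<rho> \<or> strict le \<xi> \<rho> \<and> incomp le \<rho> \<eta>"
    and a: "a1 \<in> Calg I le \<xi>" "a2 \<in> Calg I le \<rho>" "a3 \<in> Calg I le \<eta>"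
  obtain p q r s where A: "\<forall>v\<in>F0 I le. a1 v = T I le \<xi> p q r s v" using Calg_rep[OF a(1) I(1)] by blast
  obtain p2 q2 r2 s2 where B: "\<forall>v\<in>F0 I le. a2 v = T I le \<rho> p2 q2 r2 s2 v" using Calg_rep[OF a(2) I(2)] by blast
  obtain p3 q3 r3 s3 where C: "\<forall>v\<in>F0 I le. a3 v = T I le \<eta> p3 q3 r3 s3 v" using Calg_rep[OF a(3) I(3)] by blast
  have vs: "vstate a2 = p2" using vstate_rep[OF I(2) B] .
  have key: "\<forall>e. adm I le \<xi> e \<or> topc I le \<xi> e \<longrightarrow>
      T I le \<rho> p2 q2 r2 s2 (T I le \<eta> p3 q3 r3 s3 w) e = p2 * T I le \<eta> p3 q3 r3 s3 w e" for w
  proof -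
    have nl: "\<not> le \<rho> \<xi>" if "strict le \<xi> \<rho> \<or> incomp le \<xi> \<rho>"
      using that antisym I unfolding strict_def incomp_def by blast
    show ?thesis using cond
    proof (elim disjE conjE)
      assume "strict le \<xi> \<rho>" "strict le \<eta> \<rho>"
      then show ?thesis using case12[OF I] nl by blast
    next
      assume "incomp le \<xi> \<rho>" "strict le \<eta> \<rho>"
      then show ?thesis using case12[OF I] nl by blast
    next
      assume "strict le \<xi> \<rho>" "incomp le \<rho> \<eta>"
      then show ?thesis using case3[OF I] by blast
    qed
  qed
  show "op_eq I le (a1 \<circ> a2 \<circ> a3) (\<lambda>v c. vstate a2 * (a1 \<circ> a3) v c)"
    unfolding op_eq_def
  proof
    fix v assume v: "v \<in> F0 I le"
    have v3: "a3 v \<in> F0 I le" using Calg_F0[OF a(3) I(3) v] .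
    have v23: "a2 (a3 v) \<in> F0 I le" using Calg_F0[OF a(2) I(2) v3] .
    have "(a1 \<circ> a2 \<circ> a3) v = T I le \<xi> p q r s (T I le \<rho> p2 q2 r2 s2 (T I le \<eta> p3 q3 r3 s3 v))"
      using A B C v v3 v23 by simp
    also have "\<dots> = (\<lambda>c. p2 * T I le \<xi> p q r s (T I le \<eta> p3 q3 r3 s3 v) c)"
      by (rule ext, rule T_local[OF I(1) key])
    also have "\<dots> = (\<lambda>c. vstate a2 * (a1 \<circ> a3) v c)" using A C v v3 vs by simp
    finally show "(a1 \<circ> a2 \<circ> a3) v = (\<lambda>c. vstate a2 * (a1 \<circ> a3) v c)" .
  qed
qed


lemma T_lin1: "T I le \<xi> p q r s (\<lambda>d. \<alpha> * u d + w d) = (\<lambda>d. \<alpha> * T I le \<xi> p q r s u d + T I le \<xi> p q r s w d)"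
  by (rule ext) (simp add: T_def algebra_simps)

lemma chain_last_I: "is_chain I le d \<Longrightarrow> d \<noteq> [] \<Longrightarrow> last d \<in> I"
  unfolding is_chain_def by auto

lemma T_supp:
  assumes I: "\<xi> \<in> I" "\<theta> \<in> I" and st: "strict le \<theta> \<xi>"
    and z: "\<forall>c. z c \<noteq> 0 \<longrightarrow> c \<noteq> [] \<and> le (last c) \<theta>"
    and nz: "T I le \<xi> p q r s z d \<noteq> 0"
  shows "d \<noteq> [] \<and> le (last d) \<xi>"
proof -
  have lt: "le \<theta> \<xi>" using st unfolding strict_def by simp
  have own: "d \<noteq> [] \<and> le (last d) \<xi>" if "z d \<noteq> 0" "is_chain I le d"
    using that z trans[OF chain_last_I[OF that(2)] I(2,1) _ lt] by blast
  show ?thesis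
  proof (cases "adm I le \<xi> d")
    case True
    then have ch: "is_chain I le d" using adm_chain by blast
    have "z d \<noteq> 0 \<or> z (\<xi>#d) \<noteq> 0" using nz True by (auto simp: T_def)
    then show ?thesis
    proof
      assume "z d \<noteq> 0" then show ?thesis using own ch by blast
    next
      assume zz: "z (\<xi>#d) \<noteq> 0"
      show ?thesis
      proof (cases "d = []")
        case True
        then have "le \<xi> \<theta>" using z zz by fastforce
        then show ?thesis using st antisym I unfolding strict_def by blast
      next
        case False
        then have "le (last d) \<theta>" using z zz by fastforce
        then show ?thesis using False trans[OF chain_last_I[OF ch False] I(2,1) _ lt] by blast
      qed
    qed
  next
    case False
    then have tc: "topc I le \<xi> d" using nz by (auto simp: T_def split: if_splits)
    then have ch: "is_chain I le d" using top_chain by blast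
    have dne: "d \<noteq> []" using tc unfolding topc_def by simp
    have "z (tl d) \<noteq> 0 \<or> z d \<noteq> 0" using nz tc False by (auto simp: T_def)
    then show ?thesis
    proof
      assume "z d \<noteq> 0" then show ?thesis using own ch by blast
    next
      assume zz: "z (tl d) \<noteq> 0"
      then have "tl d \<noteq> []" "le (last (tl d)) \<theta>" using z by blast+
      moreover have "last (tl d) = last d" using dne \<open>tl d \<noteq> []\<close> by (cases d) auto
      ultimately show ?thesis using dne trans[OF chain_last_I[OF ch dne] I(2,1) _ lt] by simp
    qed
  qed
qed

lemma T_vac: assumes "\<xi> \<in> I" shows "T I le \<xi> p q r s vac = (\<lambda>d. p * vac d + r * ev [\<xi>] d)"
proof -
  have ad: "adm I le \<xi> []" unfolding adm_def is_chain_def by simp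
  show ?thesis using T_ev_adm[OF assms ad] unfolding vac_ev by simp
qed

lemma BM2_po: "BM2 I le (Calg I le)"
  unfolding BM2_def
proof (intro allI impI)
  fix xs :: "'i list" and as :: "'i op list" and m k
  assume H: "length as = length xs \<and> set xs \<subseteq> I \<and> m \<le> k \<and> k < length xs \<and>
       (\<forall>j<m. strict le (xs ! (j+1)) (xs ! j)) \<and>
       (\<forall>j. m \<le> j \<and> j < k \<longrightarrow> incomp le (xs ! j) (xs ! (j+1))) \<and>
       (\<forall>j. k \<le> j \<and> j + 1 < length xs \<longrightarrow> strict le (xs ! j) (xs ! (j+1))) \<and>
       (\<forall>j<length xs. as ! j \<in> Calg I le (xs ! j))"
  have Hdec: "\<forall>j<m. strict le (xs ! (j+1)) (xs ! j)" using H by blast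
  have Hinc: "\<forall>j. m \<le> j \<and> j < k \<longrightarrow> incomp le (xs ! j) (xs ! (j+1))" using H by blast
  have Hstr: "\<forall>j. k \<le> j \<and> j + 1 < length xs \<longrightarrow> strict le (xs ! j) (xs ! (j+1))" using H by blast
  define n where "n = length xs"
  have len: "length as = n" using H n_def by simp
  have mn: "m < n" "k < n" using H n_def by linarith+
  have xI: "xs ! j \<in> I" if "j < n" for j using H that n_def nth_mem by blast
  have aC: "as ! j \<in> Calg I le (xs ! j)" if "j < n" for j using H that n_def by blast
  define W where "W j = foldr (\<circ>) (drop j as) id vac" for j
  define P where "P j = prod_list (map vstate (drop j as))" for j
  have dr: "drop j as = as ! j # drop (Suc j) as" if "j < n" for j
    using Cons_nth_drop_Suc[of j as] that len by simp
  have Wstep: "W j = (as ! j) (W (Suc j))" if "j < n" for j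
    unfolding W_def dr[OF that] by simp
  have Pstep: "P j = vstate (as ! j) * P (Suc j)" if "j < n" for j
    unfolding P_def dr[OF that] by simp
  have Wn: "W n = vac" and Pn: "P n = 1" using len unfolding W_def P_def by simp_all
  have WF: "\<forall>j. n - j = i \<longrightarrow> j \<le> n \<longrightarrow> W j \<in> F0 I le" for i
  proof (induction i)
    case 0 then show ?case using Wn vac_F0 by auto
  next
    case (Suc i)
    show ?case
    proof (intro allI impI)
      fix j assume "n - j = Suc i" "j \<le> n"
      then have "j < n" "n - Suc j = i" by auto
      then show "W j \<in> F0 I le" using Suc.IH Wstep Calg_F0[OF aC xI] by simp
    qed
  qed
  have WF0: "W j \<in> F0 I le" if "j \<le> n" for j using WF that by blast
  have rep: "\<exists>p q r s. \<forall>v\<in>F0 I le. (as ! j) v = T I le (xs ! j) p q r s v" if "j < n" for j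
    using Calg_rep[OF aC[OF that] xI[OF that]] .
  have ph1: "\<forall>j. n - j = i \<longrightarrow> m \<le> j \<longrightarrow> j \<le> n \<longrightarrow>
      (\<exists>c. W j = (\<lambda>d. P j * vac d + c * ev [xs ! j] d) \<and> (j = n \<longrightarrow> c = 0))" for i
  proof (induction i)
    case 0
    have "W n = (\<lambda>d. P n * vac d + 0 * ev [xs ! n] d)" using Wn Pn by simp
    then show ?case by auto
  next
    case (Suc i)
    show ?case
    proof (intro allI impI)
      fix j assume j: "n - j = Suc i" "m \<le> j" "j \<le> n"
      then have jn: "j < n" "n - Suc j = i" by auto
      obtain c where c: "W (Suc j) = (\<lambda>d. P (Suc j) * vac d + c * ev [xs ! Suc j] d)"
        and c0: "Suc j = n \<longrightarrow> c = 0" using Suc.IH[rule_format, of "Suc j"] jn j by auto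
      obtain p q r s where A: "\<forall>v\<in>F0 I le. (as ! j) v = T I le (xs ! j) p q r s v" using rep[OF jn(1)] by blast
      have vs: "vstate (as ! j) = p" using vstate_rep[OF xI[OF jn(1)] A] .
      have kill: "c * T I le (xs ! j) p q r s (ev [xs ! Suc j]) d = 0" for d
      proof (cases "c = 0")
        case False
        then have sj: "Suc j < n" using c0 jn by auto
        have nle: "\<not> le (xs ! Suc j) (xs ! j)"
        proof (cases "j < k")
          case True
          then have "incomp le (xs ! j) (xs ! (j+1))" using Hinc[rule_format, of j] j(2) by simp
          then show ?thesis unfolding incomp_def by simp
        next
          case False
          then have "strict le (xs ! j) (xs ! (j+1))" using Hstr[rule_format, of j] sj n_def by simp
          then show ?thesis using antisym xI[OF jn(1)] xI[OF sj] unfolding strict_def by auto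
        qed
        have "\<not> adm I le (xs ! j) [xs ! Suc j]" using nle unfolding adm_def strict_def by auto
        moreover have "\<not> topc I le (xs ! j) [xs ! Suc j]" using nle refl[OF xI[OF jn(1)]] unfolding topc_def by auto
        ultimately show ?thesis using T_ev_other[OF xI[OF jn(1)]] by simp
      qed simp
      have "W j = T I le (xs ! j) p q r s (W (Suc j))" using Wstep[OF jn(1)] A WF0[of "Suc j"] jn by simp
      also have "\<dots> = (\<lambda>d. P (Suc j) * T I le (xs ! j) p q r s vac d + c * T I le (xs ! j) p q r s (ev [xs ! Suc j]) d)"
        unfolding c T_lin ..
      also have "\<dots> = (\<lambda>d. P j * vac d + (P (Suc j) * r) * ev [xs ! j] d)"
        unfolding kill T_vac[OF xI[OF jn(1)]] Pstep[OF jn(1)] vs by (simp add: algebra_simps)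
      finally show "\<exists>c. W j = (\<lambda>d. P j * vac d + c * ev [xs ! j] d) \<and> (j = n \<longrightarrow> c = 0)"
        using jn by blast
    qed
  qed
  have ph2: "\<forall>j. m - j = i \<longrightarrow> j \<le> m \<longrightarrow>
      (\<exists>z. W j = (\<lambda>d. P j * vac d + z d) \<and> (\<forall>c. z c \<noteq> 0 \<longrightarrow> c \<noteq> [] \<and> le (last c) (xs ! j)))" for i
  proof (induction i)
    case 0
    show ?case
    proof (intro allI impI)
      fix j assume "m - j = 0" "j \<le> m"
      then have jm: "j = m" by simp
      obtain c where c: "W m = (\<lambda>d. P m * vac d + c * ev [xs ! m] d)" using ph1[of "n - m", rule_format, of m] mn by auto
      have zz: "\<forall>d. c * ev [xs ! m] d \<noteq> 0 \<longrightarrow> d \<noteq> [] \<and> le (last d) (xs ! j)"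
        using refl[OF xI[OF mn(1)]] jm by (simp add: ev_def)
      have cc: "W j = (\<lambda>d. P j * vac d + c * ev [xs ! m] d)" using c jm by simp
      show "\<exists>z. W j = (\<lambda>d. P j * vac d + z d) \<and> (\<forall>c. z c \<noteq> 0 \<longrightarrow> c \<noteq> [] \<and> le (last c) (xs ! j))"
        by (rule exI[of _ "\<lambda>d. c * ev [xs ! m] d"], rule conjI[OF cc zz])
    qed
  next
    case (Suc i)
    show ?case
    proof (intro allI impI)
      fix j assume j: "m - j = Suc i" "j \<le> m"
      then have jm: "j < m" "m - Suc j = i" by auto
      then have jn: "j < n" "Suc j < n" using mn by auto
      obtain z where z: "W (Suc j) = (\<lambda>d. P (Suc j) * vac d + z d)"
        and zs: "\<forall>c. z c \<noteq> 0 \<longrightarrow> c \<noteq> [] \<and> le (last c) (xs ! Suc j)" using Suc.IH[rule_format, of "Suc j"] jm by auto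
      obtain p q r s where A: "\<forall>v\<in>F0 I le. (as ! j) v = T I le (xs ! j) p q r s v" using rep[OF jn(1)] by blast
      have vs: "vstate (as ! j) = p" using vstate_rep[OF xI[OF jn(1)] A] .
      have st: "strict le (xs ! Suc j) (xs ! j)" using Hdec[rule_format, of j] jm by simp
      define z2 where "z2 d = P (Suc j) * r * ev [xs ! j] d + T I le (xs ! j) p q r s z d" for d
      have "W j = T I le (xs ! j) p q r s (W (Suc j))" using Wstep[OF jn(1)] A WF0[of "Suc j"] jn by simp
      also have "\<dots> = (\<lambda>d. P (Suc j) * T I le (xs ! j) p q r s vac d + T I le (xs ! j) p q r s z d)"
        unfolding z T_lin1 ..
      also have "\<dots> = (\<lambda>d. P j * vac d + z2 d)"
        unfolding z2_def T_vac[OF xI[OF jn(1)]] Pstep[OF jn(1)] vs by (simp add: algebra_simps)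
      finally have W: "W j = (\<lambda>d. P j * vac d + z2 d)" .
      have zs2: "\<forall>c. z2 c \<noteq> 0 \<longrightarrow> c \<noteq> [] \<and> le (last c) (xs ! j)"
      proof (intro allI impI)
        fix c assume nz: "z2 c \<noteq> 0"
        show "c \<noteq> [] \<and> le (last c) (xs ! j)"
        proof (cases "c = [xs ! j]")
          case True then show ?thesis using refl[OF xI[OF jn(1)]] by simp
        next
          case False
          then have "T I le (xs ! j) p q r s z c \<noteq> 0" using nz unfolding z2_def ev_def by simp
          then show ?thesis using T_supp[OF xI[OF jn(1)] xI[OF jn(2)] st zs] by blast
        qed
      qed
      show "\<exists>z. W j = (\<lambda>d. P j * vac d + z d) \<and> (\<forall>c. z c \<noteq> 0 \<longrightarrow> c \<noteq> [] \<and> le (last c) (xs ! j))"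
        by (rule exI[of _ z2], rule conjI[OF W zs2])
    qed
  qed
  obtain z where z: "W 0 = (\<lambda>d. P 0 * vac d + z d)" and zs: "\<forall>c. z c \<noteq> 0 \<longrightarrow> c \<noteq> [] \<and> le (last c) (xs ! 0)"
    using ph2[of m, rule_format, of 0] by auto
  have "z [] = 0" using zs by blast
  have fin: "finite {c. W 0 c \<noteq> 0}" using WF0[of 0] unfolding F0_def by simp
  have "vstate (foldr (\<circ>) as id) = inner_F (W 0) vac" unfolding vstate_def W_def by simp
  also have "\<dots> = W 0 []" using inner_vac[OF fin] .
  also have "\<dots> = P 0" using z \<open>z [] = 0\<close> by (simp add: vac_def)
  finally show "vstate (foldr (\<circ>) as id) = prod_list (map vstate as)" unfolding P_def by simp
qed

lemma bm_po: "bm_independent I le (Calg I le)"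
  unfolding bm_independent_def using BM1_po BM2_po by blast

end


lemma po_a: "po (I_a d) (le_a d)"
proof
  fix x y z
  show "x \<in> I_a d \<Longrightarrow> le_a d x x" by (simp add: le_a_def)
  show "x \<in> I_a d \<Longrightarrow> y \<in> I_a d \<Longrightarrow> z \<in> I_a d \<Longrightarrow> le_a d x y \<Longrightarrow> le_a d y z \<Longrightarrow> le_a d x z"
    unfolding le_a_def using order_trans by blast
  show "x \<in> I_a d \<Longrightarrow> y \<in> I_a d \<Longrightarrow> le_a d x y \<Longrightarrow> le_a d y x \<Longrightarrow> x = y"
  proof -
    assume xI: "x \<in> I_a d" and yI: "y \<in> I_a d" and 1: "le_a d x y" and 2: "le_a d y x"
    show "x = y"
    proof
      fix i show "x i = y i"
      proof (cases "i < d")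
        case True then show ?thesis using 1 2 unfolding le_a_def by (meson order_antisym)
      next
        case False then show ?thesis using xI yI unfolding I_a_def by simp
      qed
    qed
  qed
qed

lemma le_b_iff: "le_b d (s, y) (t, x) \<longleftrightarrow> real t - real s \<ge> L2_set (\<lambda>i. real_of_int (x i - y i)) {..<d}"
  by (simp add: le_b_def L2_set_def)

lemma po_b: "po (I_b d) (le_b d)"
proof
  fix a b c :: "nat \<times> (nat \<Rightarrow> int)"
  show "a \<in> I_b d \<Longrightarrow> le_b d a a" by (cases a) (simp add: le_b_def)
  show "a \<in> I_b d \<Longrightarrow> b \<in> I_b d \<Longrightarrow> c \<in> I_b d \<Longrightarrow> le_b d a b \<Longrightarrow> le_b d b c \<Longrightarrow> le_b d a c"
  proof -
    assume ab: "le_b d a b" and bc: "le_b d b c"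
    obtain s y where a: "a = (s, y)" by (cases a)
    obtain t x where b: "b = (t, x)" by (cases b)
    obtain u z where c: "c = (u, z)" by (cases c)
    have 1: "real t - real s \<ge> L2_set (\<lambda>i. real_of_int (x i - y i)) {..<d}" using ab a b le_b_iff by blast
    have 2: "real u - real t \<ge> L2_set (\<lambda>i. real_of_int (z i - x i)) {..<d}" using bc b c le_b_iff by blast
    have "L2_set (\<lambda>i. real_of_int (z i - y i)) {..<d}
        = L2_set (\<lambda>i. real_of_int (z i - x i) + real_of_int (x i - y i)) {..<d}" by simp
    also have "\<dots> \<le> L2_set (\<lambda>i. real_of_int (z i - x i)) {..<d} + L2_set (\<lambda>i. real_of_int (x i - y i)) {..<d}"
      by (rule L2_set_triangle_ineq)
    finally show "le_b d a c" using 1 2 a c le_b_iff by fastforce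
  qed
  show "a \<in> I_b d \<Longrightarrow> b \<in> I_b d \<Longrightarrow> le_b d a b \<Longrightarrow> le_b d b a \<Longrightarrow> a = b"
  proof -
    assume aI: "a \<in> I_b d" and bI: "b \<in> I_b d" and ab: "le_b d a b" and ba: "le_b d b a"
    obtain s y where a: "a = (s, y)" by (cases a)
    obtain t x where b: "b = (t, x)" by (cases b)
    have 1: "real t - real s \<ge> L2_set (\<lambda>i. real_of_int (x i - y i)) {..<d}" using ab a b le_b_iff by blast
    have 2: "real s - real t \<ge> L2_set (\<lambda>i. real_of_int (y i - x i)) {..<d}" using ba a b le_b_iff by blast
    have n1: "L2_set (\<lambda>i. real_of_int (x i - y i)) {..<d} \<ge> 0" by simp
    have n2: "L2_set (\<lambda>i. real_of_int (y i - x i)) {..<d} \<ge> 0" by simp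
    have ts: "t = s" using 1 2 n1 n2 by linarith
    have "L2_set (\<lambda>i. real_of_int (x i - y i)) {..<d} = 0" using 1 2 n1 n2 by linarith
    then have "\<forall>i\<in>{..<d}. real_of_int (x i - y i) = 0" by (simp add: L2_set_eq_0_iff)
    then have "\<forall>i<d. x i = y i" by simp
    moreover have "\<forall>i\<ge>d. x i = 0 \<and> y i = 0" using aI bI a b unfolding I_b_def by auto
    ultimately have "x = y"
    proof (intro ext)
      fix i assume "\<forall>i<d. x i = y i" "\<forall>i\<ge>d. x i = 0 \<and> y i = 0"
      then show "x i = y i" by (cases "i < d") simp_all
    qed
    then show "a = b" using a b ts by simp
  qed
qed

lemma psd_add: "psd d A \<Longrightarrow> psd d B \<Longrightarrow> psd d (\<lambda>i j. A i j + B i j)"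
  unfolding psd_def
proof
  fix v :: "nat \<Rightarrow> real"
  assume "\<forall>v. 0 \<le> (\<Sum>i<d. \<Sum>j<d. v i * A i j * v j)" "\<forall>v. 0 \<le> (\<Sum>i<d. \<Sum>j<d. v i * B i j * v j)"
  then have "0 \<le> (\<Sum>i<d. \<Sum>j<d. v i * A i j * v j) + (\<Sum>i<d. \<Sum>j<d. v i * B i j * v j)"
    by (meson add_nonneg_nonneg)
  also have "\<dots> = (\<Sum>i<d. \<Sum>j<d. v i * (A i j + B i j) * v j)"
    by (simp add: sum.distrib[symmetric] algebra_simps)
  finally show "0 \<le> (\<Sum>i<d. \<Sum>j<d. v i * (A i j + B i j) * v j)" .
qed

lemma quad_delta: fixes d :: nat assumes "a < d" "b < d"
  shows "(\<Sum>i<d. \<Sum>j<d. of_bool (i = a) * M i j * of_bool (j = b)) = (M a b :: real)"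
proof -
  have e1: "(\<Sum>j<d. c * M i j * of_bool (j = b)) = c * M i b" for i c
  proof -
    have "(\<Sum>j<d. c * M i j * of_bool (j = b)) = (\<Sum>j<d. if j = b then c * M i j else 0)"
      by (rule sum.cong) auto
    also have "\<dots> = c * M i b" using assms(2) by (simp add: sum.delta)
    finally show ?thesis .
  qed
  have "(\<Sum>i<d. \<Sum>j<d. of_bool (i = a) * M i j * of_bool (j = b)) = (\<Sum>i<d. of_bool (i = a) * M i b)"
    using e1 by simp
  also have "\<dots> = (\<Sum>i<d. if i = a then M i b else 0)" by (rule sum.cong) auto
  also have "\<dots> = M a b" using assms(1) by (simp add: sum.delta)
  finally show ?thesis .
qed

lemma quad_two: fixes d :: nat shows
  "(\<Sum>i<d. \<Sum>j<d. (f i + g i) * M i j * (f j + g j)) =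
   (\<Sum>i<d. \<Sum>j<d. f i * M i j * f j) + (\<Sum>i<d. \<Sum>j<d. f i * M i j * g j)
   + (\<Sum>i<d. \<Sum>j<d. g i * M i j * f j) + (\<Sum>i<d. \<Sum>j<d. g i * M i j * (g j :: real))"
  by (simp add: algebra_simps sum.distrib)

lemma po_c: "po (I_c d) (le_c d)"
proof
  fix X Y Z
  show "X \<in> I_c d \<Longrightarrow> le_c d X X" by (simp add: le_c_def psd_def)
  show "X \<in> I_c d \<Longrightarrow> Y \<in> I_c d \<Longrightarrow> Z \<in> I_c d \<Longrightarrow> le_c d X Y \<Longrightarrow> le_c d Y Z \<Longrightarrow> le_c d X Z"
  proof -
    assume "le_c d X Y" "le_c d Y Z"
    then have "psd d (\<lambda>i j. real_of_int (Y i j - X i j) + real_of_int (Z i j - Y i j))"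
      unfolding le_c_def by (rule psd_add)
    then show "le_c d X Z" unfolding le_c_def by simp
  qed
  show "X \<in> I_c d \<Longrightarrow> Y \<in> I_c d \<Longrightarrow> le_c d X Y \<Longrightarrow> le_c d Y X \<Longrightarrow> X = Y"
  proof -
    assume XI: "X \<in> I_c d" and YI: "Y \<in> I_c d" and p1: "le_c d X Y" and p2: "le_c d Y X"
    define D where "D i j = real_of_int (Y i j - X i j)" for i j
    have sX: "\<forall>i j. X i j = X j i" using XI unfolding I_c_def by blast
    have sY: "\<forall>i j. Y i j = Y j i" using YI unfolding I_c_def by blast
    have zX: "\<forall>i j. (i \<ge> d \<or> j \<ge> d) \<longrightarrow> X i j = 0" using XI unfolding I_c_def by blast
    have zY: "\<forall>i j. (i \<ge> d \<or> j \<ge> d) \<longrightarrow> Y i j = 0" using YI unfolding I_c_def by blast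
    have sym: "D i j = D j i" for i j using sX sY unfolding D_def by simp
    have Q0: "(\<Sum>i<d. \<Sum>j<d. v i * D i j * v j) = 0" for v
    proof -
      have a: "(\<Sum>i<d. \<Sum>j<d. v i * D i j * v j) \<ge> 0" using p1 unfolding le_c_def psd_def D_def by blast
      have b: "(\<Sum>i<d. \<Sum>j<d. v i * real_of_int (X i j - Y i j) * v j) \<ge> 0" using p2 unfolding le_c_def psd_def by blast
      have "(\<Sum>i<d. \<Sum>j<d. v i * real_of_int (X i j - Y i j) * v j) = - (\<Sum>i<d. \<Sum>j<d. v i * D i j * v j)"
        unfolding D_def by (simp add: sum_negf[symmetric] algebra_simps)
      then show ?thesis using a b by linarith
    qed
    have diag: "D a a = 0" if "a < d" for a
      using Q0[of "\<lambda>k. of_bool (k = a)"] quad_delta[OF that that, of D] by simp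
    have off: "D a b = 0" if "a < d" "b < d" for a b
    proof -
      have "0 = (\<Sum>i<d. \<Sum>j<d. (of_bool (i = a) + of_bool (i = b)) * D i j * (of_bool (j = a) + of_bool (j = b)))"
        using Q0[of "\<lambda>k. of_bool (k = a) + of_bool (k = b)"] by simp
      also have "\<dots> = D a a + D a b + D b a + D b b"
        unfolding quad_two quad_delta[OF that(1) that(1)] quad_delta[OF that(1) that(2)]
          quad_delta[OF that(2) that(1)] quad_delta[OF that(2) that(2)] ..
      finally show ?thesis using diag that sym[of a b] by simp
    qed
    show "X = Y"
    proof (intro ext)
      fix i j
      show "X i j = Y i j"
      proof (cases "i < d \<and> j < d")
        case True then show ?thesis using off[of i j] unfolding D_def by simp
      next
        case False then have "i \<ge> d \<or> j \<ge> d" by auto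
        then show ?thesis using zX zY by auto
      qed
    qed
  qed
qed

theorem corollary3p4:
  fixes d :: nat
  assumes "1 \<le> d"
  shows "bm_independent (I_a d) (le_a d) (Calg (I_a d) (le_a d))
       \<and> bm_independent (I_b d) (le_b d) (Calg (I_b d) (le_b d))
       \<and> bm_independent (I_c d) (le_c d) (Calg (I_c d) (le_c d))"
  using po.bm_po[OF po_a] po.bm_po[OF po_b] po.bm_po[OF po_c] by blast

end
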